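(* Let $m\ge1$ and for $p_1,\dots,p_m\ge0$ let $K_{p_1,\dots,p_m}$ be the complete $m$-partite graph with parts of sizes $p_1,\dots,p_m$ (two vertices adjacent iff they lie in different parts). Then $$\sum_{p_1,\dots,p_m\ge0}\mathrm{sa}(K_{p_1,\dots,p_m};t)\,\frac{x_1^{p_1}}{p_1!}\cdots\frac{x_m^{p_m}}{p_m!} = e^{t(x_1+\cdots+x_m)}\,\frac{(1-m)+\cosh x_1+\cdots+\cosh x_m}{\cosh(x_1+\cdots+x_m)}.$$
   Context: All graphs are finite, simple and undirected. For a graph $G=(V,E)$ and $V'\subseteq V$, $G|_{V'}$ denotes the induced subgraph on $V'$. The signed a-number $\mathrm{sa}(G)$ is defined recursively: $\mathrm{sa}(G)=1$ if $G$ is the empty graph (no vertices); $\mathrm{sa}(G)=0$ if $G$ has a connected component with an odd number of vertices; otherwise $\mathrm{sa}(G)=-\sum_{V'\subsetneq V}\mathrm{sa}(G|_{V'})$. The signed a-polynomial of $G$ is $\mathrm{sa}(G;t)=\sum_{V'\subseteq V}\mathrm{sa}(G|_{V'})\,t^{|V\setminus V'|}$. *)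

theory Defs
  imports "HOL-Analysis.Analysis"
begin

text \<open>A (simple, undirected) graph is given by a vertex set V and a symmetric,
irreflexive adjacency relation E; the induced subgraph on W is (W, E).\<close>

definition adj_in :: "('a \<Rightarrow> 'a \<Rightarrow> bool) \<Rightarrow> 'a set \<Rightarrow> 'a \<Rightarrow> 'a \<Rightarrow> bool" where
  "adj_in E V a b \<longleftrightarrow> a \<in> V \<and> b \<in> V \<and> E a b"

definition component :: "('a \<Rightarrow> 'a \<Rightarrow> bool) \<Rightarrow> 'a set \<Rightarrow> 'a \<Rightarrow> 'a set" where
  "component E V v = {u. (adj_in E V)\<^sup>*\<^sup>* v u}"

definition has_odd_component :: "('a \<Rightarrow> 'a \<Rightarrow> bool) \<Rightarrow> 'a set \<Rightarrow> bool" where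
  "has_odd_component E V \<longleftrightarrow> (\<exists>v\<in>V. odd (card (component E V v)))"

function sa :: "('a \<Rightarrow> 'a \<Rightarrow> bool) \<Rightarrow> 'a set \<Rightarrow> int" where
  "sa E V = (if \<not> finite V then 0
             else if V = {} then 1
             else if has_odd_component E V then 0
             else - (\<Sum>W\<in>{W. W \<subset> V}. sa E W))"
  by auto
termination
  by (relation "Wellfounded.measure (\<lambda>(E, V). card V)") (auto intro: psubset_card_mono)

definition sa_poly :: "('a \<Rightarrow> 'a \<Rightarrow> bool) \<Rightarrow> 'a set \<Rightarrow> real \<Rightarrow> real" where
  "sa_poly E V t = (\<Sum>W\<in>Pow V. real_of_int (sa E W) * t ^ card (V - W))"

text \<open>Complete multipartite graph K_{p_0,...,p_{m-1}}: vertex (i,j) lies in part i.\<close>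
definition multipartite_vertices :: "nat \<Rightarrow> (nat \<Rightarrow> nat) \<Rightarrow> (nat \<times> nat) set" where
  "multipartite_vertices m p = {(i, j). i < m \<and> j < p i}"

definition multipartite_adj :: "nat \<times> nat \<Rightarrow> nat \<times> nat \<Rightarrow> bool" where
  "multipartite_adj u v \<longleftrightarrow> fst u \<noteq> fst v"

end

theory Submission
  imports Defs
begin


lemma has_sum_mult_product:
  fixes f g :: "_ \<Rightarrow> real"
  assumes hf: "(f has_sum S) A" and hg: "(g has_sum T) B"
  shows "((\<lambda>(a,b). f a * g b) has_sum (S*T)) (A \<times> B)"
proof -
  have fa: "(\<lambda>x. norm (f x)) summable_on A" using hf summable_on_iff_abs_summable_on_real has_sum_imp_summable by blast
  have ga: "(\<lambda>x. norm (g x)) summable_on B" using hg summable_on_iff_abs_summable_on_real has_sum_imp_summable by blast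
  have sig: "(\<lambda>z. norm ((\<lambda>(a,b). f a * g b) z)) summable_on (Sigma A (\<lambda>_. B))"
  proof (rule Infinite_Sum.abs_summable_on_Sigma_iff[THEN iffD2], intro conjI ballI)
    fix x assume "x \<in> A"
    show "(\<lambda>y. norm ((\<lambda>(a,b). f a * g b) (x, y))) summable_on B"
      using summable_on_cmult_right[OF ga, of "norm (f x)"] by (simp add: norm_mult abs_mult)
  next
    have "(\<lambda>x. norm (norm (f x) * infsum (\<lambda>y. norm (g y)) B)) summable_on A"
      using summable_on_cmult_left[OF fa, of "infsum (\<lambda>y. norm (g y)) B"]
      by (simp add: norm_mult infsum_nonneg)
    then show "(\<lambda>x. norm (infsum (\<lambda>y. norm ((\<lambda>(a,b). f a * g b) (x, y))) B)) summable_on A"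
      by (simp add: abs_mult infsum_cmult_right')
  qed
  then have summ: "(\<lambda>(a,b). f a * g b) summable_on (A \<times> B)"
    using abs_summable_summable by blast
  have "infsum (\<lambda>(a,b). f a * g b) (A \<times> B) = infsum (\<lambda>x. infsum (\<lambda>y. f x * g y) B) A"
    using infsum_Sigma'_banach[of "\<lambda>a b. f a * g b" A "\<lambda>_. B"] summ by simp
  also have "\<dots> = infsum (\<lambda>x. f x * T) A"
    using hg by (simp add: infsum_cmult_right' infsumI)
  also have "\<dots> = S * T" using hf by (simp add: infsum_cmult_left' infsumI)
  finally show ?thesis using summ has_sum_iff by blast
qed

definition DD :: "nat \<Rightarrow> (nat \<Rightarrow> nat) set" where "DD m = {p. \<forall>i\<ge>m. p i = 0}"

lemma has_sum_prod_DD: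
  fixes f :: "nat \<Rightarrow> nat \<Rightarrow> real"
  assumes "\<And>i. i < m \<Longrightarrow> (f i has_sum S i) UNIV"
  shows "((\<lambda>r. \<Prod>i<m. f i (r i)) has_sum (\<Prod>i<m. S i)) (DD m)"
  using assms
proof (induction m)
  case 0
  have "DD 0 = {\<lambda>_. 0}" by (auto simp: DD_def)
  then show ?case by (simp add: has_sum_finiteI)
next
  case (Suc m)
  have IH: "((\<lambda>r. \<Prod>i<m. f i (r i)) has_sum (\<Prod>i<m. S i)) (DD m)" using Suc by simp
  have P: "((\<lambda>(r,n). (\<Prod>i<m. f i (r i)) * f m n) has_sum ((\<Prod>i<m. S i) * S m)) (DD m \<times> UNIV)"
    using has_sum_mult_product[OF IH Suc.prems[of m]] by simp
  show ?case
  proof (subst has_sum_reindex_bij_witness[where i="\<lambda>(r,n). r(m:=n)" and j="\<lambda>p. (p(m:=0), p m)"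
        and T="DD m \<times> UNIV" and h="\<lambda>(r,n). (\<Prod>i<m. f i (r i)) * f m n" and s'="(\<Prod>i<m. S i) * S m"])
    show "\<And>a. a \<in> DD (Suc m) \<Longrightarrow> (\<lambda>(r,n). r(m:=n)) ((\<lambda>p. (p(m:=0), p m)) a) = a" by auto
    show "\<And>a. a \<in> DD (Suc m) \<Longrightarrow> (\<lambda>p. (p(m:=0), p m)) a \<in> DD m \<times> UNIV"
      by (auto simp: DD_def)
    show "\<And>b. b \<in> DD m \<times> UNIV \<Longrightarrow> (\<lambda>p. (p(m:=0), p m)) ((\<lambda>(r,n). r(m:=n)) b) = b"
      by (auto simp: DD_def)
    show "\<And>b. b \<in> DD m \<times> UNIV \<Longrightarrow> (\<lambda>(r,n). r(m:=n)) b \<in> DD (Suc m)"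
      by (auto simp: DD_def)
    show "\<And>a. a \<in> DD (Suc m) \<Longrightarrow> (\<lambda>(r,n). (\<Prod>i<m. f i (r i)) * f m n) ((\<lambda>p. (p(m:=0), p m)) a)
         = (\<Prod>i<Suc m. f i (a i))"
      by (simp add: mult.commute)
    show "(\<Prod>i<Suc m. S i) = (\<Prod>i<m. S i) * S m" by (simp add: mult.commute)
    show "((\<lambda>(r,n). (\<Prod>i<m. f i (r i)) * f m n) has_sum (\<Prod>i<m. S i) * S m) (DD m \<times> UNIV)" by (rule P)
  qed
qed



lemma finite_below:
  assumes "p \<in> DD m"
  shows "finite {q. \<forall>i. q i \<le> p i}"
proof -
  let ?N = "\<Sum>i<m. p i"
  have "{q. \<forall>i. q i \<le> p i} \<subseteq> {f. \<forall>x. (x \<in> {..<m} \<longrightarrow> f x \<in> {..?N}) \<and> (x \<notin> {..<m} \<longrightarrow> f x = 0)}"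
  proof (clarsimp)
    fix q x assume q: "\<forall>i. q i \<le> p i"
    show "(x < m \<longrightarrow> q x \<le> ?N) \<and> (\<not> x < m \<longrightarrow> q x = 0)"
    proof (intro conjI impI)
      assume "x < m" then have "p x \<le> ?N" by (intro member_le_sum) auto
      then show "q x \<le> ?N" using q order_trans by blast
    next
      assume "\<not> x < m" then show "q x = 0" using q[rule_format, of x] assms by (auto simp: DD_def)
    qed
  qed
  moreover have "finite {f. \<forall>x. (x \<in> {..<m} \<longrightarrow> f x \<in> {..?N}) \<and> (x \<notin> {..<m} \<longrightarrow> f x = (0::nat))}"
    by (rule finite_set_of_finite_funs) auto
  ultimately show ?thesis by (rule finite_subset)
qed

lemma has_sum_cauchy_DD:
  fixes f g :: "(nat \<Rightarrow> nat) \<Rightarrow> real"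
  assumes hf: "(f has_sum S) (DD m)" and hg: "(g has_sum T) (DD m)"
  shows "((\<lambda>p. \<Sum>q\<in>{q. \<forall>i. q i \<le> p i}. f q * g (\<lambda>i. p i - q i)) has_sum (S*T)) (DD m)"
proof -
  let ?Sig = "Sigma (DD m) (\<lambda>p. {q. \<forall>i. q i \<le> p i})"
  have P: "((\<lambda>(q,r). f q * g r) has_sum S*T) (DD m \<times> DD m)"
    by (rule has_sum_mult_product[OF hf hg])
  have Q: "((\<lambda>(p,q). f q * g (\<lambda>i. p i - q i)) has_sum S*T) ?Sig"
  proof (subst has_sum_reindex_bij_witness[where j="\<lambda>(p,q). (q, \<lambda>i. p i - q i)"
        and i="\<lambda>(q,r). (\<lambda>i. q i + r i, q)" and T="DD m \<times> DD m" and h="\<lambda>(q,r). f q * g r" and s'="S*T"])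
    show "\<And>a. a \<in> ?Sig \<Longrightarrow> (\<lambda>(q,r). (\<lambda>i. q i + r i, q)) ((\<lambda>(p,q). (q, \<lambda>i. p i - q i)) a) = a"
      by auto
    show "\<And>a. a \<in> ?Sig \<Longrightarrow> (\<lambda>(p,q). (q, \<lambda>i. p i - q i)) a \<in> DD m \<times> DD m"
      apply (auto simp: DD_def)
      by (metis le_zero_eq)
    show "\<And>b. b \<in> DD m \<times> DD m \<Longrightarrow> (\<lambda>(p,q). (q, \<lambda>i. p i - q i)) ((\<lambda>(q,r). (\<lambda>i. q i + r i, q)) b) = b"
      by auto
    show "\<And>b. b \<in> DD m \<times> DD m \<Longrightarrow> (\<lambda>(q,r). (\<lambda>i. q i + r i, q)) b \<in> ?Sig"
      by (auto simp: DD_def)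
    show "\<And>a. a \<in> ?Sig \<Longrightarrow> (\<lambda>(q,r). f q * g r) ((\<lambda>(p,q). (q, \<lambda>i. p i - q i)) a) =
        (\<lambda>(p,q). f q * g (\<lambda>i. p i - q i)) a" by auto
  qed (auto intro: P)
  then have summ: "(\<lambda>(p,q). f q * g (\<lambda>i. p i - q i)) summable_on ?Sig"
    using has_sum_imp_summable by blast
  have "infsum (\<lambda>p. infsum (\<lambda>q. f q * g (\<lambda>i. p i - q i)) {q. \<forall>i. q i \<le> p i}) (DD m) = S*T"
    using infsum_Sigma'_banach[of "\<lambda>p q. f q * g (\<lambda>i. p i - q i)" "DD m" "\<lambda>p. {q. \<forall>i. q i \<le> p i}"] summ Q
    by (simp add: infsumI)
  moreover have "(\<lambda>p. infsum (\<lambda>q. f q * g (\<lambda>i. p i - q i)) {q. \<forall>i. q i \<le> p i}) summable_on (DD m)"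
    using summable_on_Sigma_banach[of "\<lambda>p q. f q * g (\<lambda>i. p i - q i)" "DD m" "\<lambda>p. {q. \<forall>i. q i \<le> p i}"] summ
    by simp
  moreover have "\<And>p. p \<in> DD m \<Longrightarrow> infsum (\<lambda>q. f q * g (\<lambda>i. p i - q i)) {q. \<forall>i. q i \<le> p i}
        = (\<Sum>q\<in>{q. \<forall>i. q i \<le> p i}. f q * g (\<lambda>i. p i - q i))"
    using finite_below by simp
  ultimately show ?thesis
    by (metis (no_types, lifting) has_sum_cong has_sum_iff)
qed



definition Xf :: "nat \<Rightarrow> (nat \<Rightarrow> real) \<Rightarrow> (nat \<Rightarrow> nat) \<Rightarrow> real" where
  "Xf m x p = (\<Prod>i<m. x i ^ p i / fact (p i))"

definition tot :: "nat \<Rightarrow> (nat \<Rightarrow> nat) \<Rightarrow> nat" where "tot m p = (\<Sum>i<m. p i)"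

lemma exp_has_sum: "((\<lambda>n. y ^ n / fact n) has_sum exp (y::real)) UNIV"
proof -
  have "(\<lambda>n. y ^ n /\<^sub>R fact n) sums exp y" by (rule exp_converges)
  moreover have "summable (\<lambda>n. norm (y ^ n /\<^sub>R fact n))" by (rule summable_norm_exp)
  ultimately have "((\<lambda>n. y ^ n /\<^sub>R fact n) has_sum exp y) UNIV" by (rule norm_summable_imp_has_sum[rotated])
  then show ?thesis by (simp add: divide_inverse mult.commute)
qed

lemma cosh_has_sum: "((\<lambda>n. if even n then y ^ n / fact n else 0) has_sum cosh (y::real)) UNIV"
proof -
  have "(\<lambda>n. if even n then y ^ n /\<^sub>R fact n else 0) sums cosh y" by (rule cosh_converges)
  moreover have "summable (\<lambda>n. norm (if even n then y ^ n /\<^sub>R fact n else 0))"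
    by (rule summable_comparison_test[OF _ summable_norm_exp[of y]]) auto
  ultimately have "((\<lambda>n. if even n then y ^ n /\<^sub>R fact n else 0) has_sum cosh y) UNIV"
    by (rule norm_summable_imp_has_sum[rotated])
  moreover have "(\<lambda>n. if even n then y ^ n /\<^sub>R fact n else 0) = (\<lambda>n. if even n then y ^ n / fact n else 0)"
    by (auto simp: fun_eq_iff divide_inverse mult.commute)
  ultimately show ?thesis by simp
qed

lemma Xf_has_sum: "((\<lambda>p. Xf m x p) has_sum exp (\<Sum>i<m. x i)) (DD m)"
proof -
  have "((\<lambda>r. \<Prod>i<m. (\<lambda>n. x i ^ n / fact n) (r i)) has_sum (\<Prod>i<m. exp (x i))) (DD m)"
    by (rule has_sum_prod_DD) (rule exp_has_sum)
  then show ?thesis by (simp add: Xf_def exp_sum)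
qed

lemma Xf_scale: "t ^ tot m r * Xf m x r = Xf m (\<lambda>i. t * x i) r"
  by (simp add: Xf_def tot_def power_sum prod.distrib[symmetric] power_mult_distrib)

lemma Xf_neg: "Xf m (\<lambda>i. - x i) r = (-1) ^ tot m r * Xf m x r"
  using Xf_scale[of "-1" m r x] by simp

lemma g_has_sum: "((\<lambda>r. t ^ tot m r * Xf m x r) has_sum exp (t * (\<Sum>i<m. x i))) (DD m)"
  using Xf_has_sum[of m "\<lambda>i. t * x i"] by (simp add: Xf_scale sum_distrib_left)

lemma c_has_sum: "((\<lambda>r. (if even (tot m r) then 1 else 0) * Xf m x r) has_sum cosh (\<Sum>i<m. x i)) (DD m)"
proof -
  have "((\<lambda>r. (Xf m x r + Xf m (\<lambda>i. - x i) r) / 2) has_sum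
        ((exp (\<Sum>i<m. x i) + exp (\<Sum>i<m. - x i)) / 2)) (DD m)"
    using has_sum_cmult_left[OF has_sum_add[OF Xf_has_sum[of m x] Xf_has_sum[of m "\<lambda>i. - x i"]], of "1/2"]
    by simp
  moreover have "(exp (\<Sum>i<m. x i) + exp (\<Sum>i<m. - x i)) / 2 = cosh (\<Sum>i<m. x i)"
    by (simp add: cosh_def sum_negf)
  moreover have "(Xf m x r + Xf m (\<lambda>i. - x i) r) / 2 = (if even (tot m r) then 1 else 0) * Xf m x r" for r
    by (simp add: Xf_neg)
  ultimately show ?thesis by simp
qed

lemma has_sum_sum_fun:
  fixes f :: "'i \<Rightarrow> 'a \<Rightarrow> real"
  assumes "finite I" "\<And>i. i \<in> I \<Longrightarrow> (f i has_sum s i) A"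
  shows "((\<lambda>x. \<Sum>i\<in>I. f i x) has_sum (\<Sum>i\<in>I. s i)) A"
  using assms
proof (induction I rule: finite_induct)
  case empty then show ?case by simp
next
  case (insert a I)
  then show ?case by (simp add: has_sum_add)
qed

lemma single_has_sum:
  assumes "i < m"
  shows "((\<lambda>p. if (\<forall>j. j \<noteq> i \<longrightarrow> p j = 0) \<and> even (p i) then Xf m x p else 0) has_sum cosh (x i)) (DD m)"
proof -
  let ?S = "{p. \<forall>j. j \<noteq> i \<longrightarrow> p j = 0}"
  have sub: "?S \<subseteq> DD m" using assms by (auto simp: DD_def)
  have X: "Xf m x (\<lambda>j. if j = i then n else 0) = x i ^ n / fact n" for n
  proof -
    have "Xf m x (\<lambda>j. if j = i then n else 0) = (\<Prod>j<m. if j = i then x i ^ n / fact n else 1)"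
      unfolding Xf_def by (intro prod.cong) auto
    also have "\<dots> = x i ^ n / fact n" using assms by (simp add: prod.delta)
    finally show ?thesis .
  qed
  have "((\<lambda>p. if even (p i) then Xf m x p else 0) has_sum cosh (x i)) ?S"
  proof (subst has_sum_reindex_bij_witness[where j="\<lambda>p. p i" and i="\<lambda>n. \<lambda>j. if j = i then n else 0"
        and T=UNIV and h="\<lambda>n. if even n then x i ^ n / fact n else 0" and s'="cosh (x i)"])
    show "\<And>a. a \<in> ?S \<Longrightarrow> (\<lambda>j. if j = i then a i else 0) = a" by auto
    show "\<And>a. a \<in> ?S \<Longrightarrow> (if even (a i) then x i ^ a i / fact (a i) else 0) = (if even (a i) then Xf m x a else 0)"
    proof -
      fix a :: "nat \<Rightarrow> nat" assume "a \<in> ?S"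
      then have "a = (\<lambda>j. if j = i then a i else 0)" by auto
      then show "(if even (a i) then x i ^ a i / fact (a i) else 0) = (if even (a i) then Xf m x a else 0)"
        using X[of "a i"] by metis
    qed
  qed (auto intro: cosh_has_sum)
  then show ?thesis
    by (rule has_sum_cong_neutral[THEN iffD1, rotated -1]) (use sub in auto)
qed

definition Tn :: "nat \<Rightarrow> (nat \<Rightarrow> nat) \<Rightarrow> real" where
  "Tn m p = (if p = (\<lambda>_. 0) then 1 - real m else 0) +
     (\<Sum>i<m. if (\<forall>j. j \<noteq> i \<longrightarrow> p j = 0) \<and> even (p i) then 1 else 0)"

lemma N_has_sum: "((\<lambda>p. Tn m p * Xf m x p) has_sum ((1 - real m) + (\<Sum>i<m. cosh (x i)))) (DD m)"
proof -
  have z: "(\<lambda>_. 0::nat) \<in> DD m" by (simp add: DD_def)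
  have A: "((\<lambda>p. if p = (\<lambda>_. 0) then 1 - real m else 0) has_sum (1 - real m)) (DD m)"
    using has_sum_cong_neutral[of "{\<lambda>_. 0}" "DD m" "\<lambda>p. if p = (\<lambda>_. 0) then 1 - real m else 0"
       "\<lambda>p. if p = (\<lambda>_. 0) then 1 - real m else 0" "1 - real m"] z
    by (auto simp: has_sum_finiteI)
  have B: "((\<lambda>p. \<Sum>i<m. if (\<forall>j. j \<noteq> i \<longrightarrow> p j = 0) \<and> even (p i) then Xf m x p else 0)
      has_sum (\<Sum>i<m. cosh (x i))) (DD m)"
    by (rule has_sum_sum_fun) (auto intro: single_has_sum)
  have "Tn m p * Xf m x p = (if p = (\<lambda>_. 0) then 1 - real m else 0) +
     (\<Sum>i<m. if (\<forall>j. j \<noteq> i \<longrightarrow> p j = 0) \<and> even (p i) then Xf m x p else 0)" for p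
    by (auto simp: Tn_def Xf_def distrib_right sum_distrib_right intro!: sum.cong)
  then show ?thesis using has_sum_add[OF A B] by simp
qed



declare sa.simps[simp del]

abbreviation "EE \<equiv> multipartite_adj"

definition single_part :: "(nat \<times> nat) set \<Rightarrow> bool" where
  "single_part W \<longleftrightarrow> (\<exists>i. \<forall>u\<in>W. fst u = i)"

lemma comp_single:
  assumes "single_part W" "v \<in> W"
  shows "component EE W v = {v}"
proof -
  have "u = v" if "(adj_in EE W)\<^sup>*\<^sup>* v u" for u
    using that
  proof (cases rule: converse_rtranclpE)
    case base then show ?thesis by simp
  next
    case (step w)
    then have "w \<in> W" "fst v \<noteq> fst w" by (auto simp: adj_in_def multipartite_adj_def)
    moreover obtain i where "\<forall>u\<in>W. fst u = i" using assms(1) unfolding single_part_def by blast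
    ultimately show ?thesis using assms(2) by auto
  qed
  then show ?thesis by (auto simp: component_def)
qed

lemma comp_multi:
  assumes "\<not> single_part W" "v \<in> W"
  shows "component EE W v = W"
proof
  show "component EE W v \<subseteq> W"
  proof
    fix u assume "u \<in> component EE W v"
    then have "(adj_in EE W)\<^sup>*\<^sup>* v u" by (simp add: component_def)
    then show "u \<in> W"
      by (induction rule: rtranclp_induct) (use assms in \<open>auto simp: adj_in_def\<close>)
  qed
next
  show "W \<subseteq> component EE W v"
  proof
    fix u assume u: "u \<in> W"
    show "u \<in> component EE W v"
    proof (cases "fst u = fst v")
      case False
      then have "adj_in EE W v u" using u assms by (auto simp: adj_in_def multipartite_adj_def)
      then show ?thesis by (simp add: component_def)
    next
      case True
      obtain w where w: "w \<in> W" "fst w \<noteq> fst v" using assms unfolding single_part_def by blast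
      have vw: "adj_in EE W v w" and wu: "adj_in EE W w u" using w u assms True
        by (auto simp: adj_in_def multipartite_adj_def)
      have "(adj_in EE W)\<^sup>*\<^sup>* w u" using wu by (rule r_into_rtranclp)
      then have "(adj_in EE W)\<^sup>*\<^sup>* v u" using vw by (rule converse_rtranclp_into_rtranclp[rotated])
      then show ?thesis by (simp add: component_def)
    qed
  qed
qed

lemma odd_char:
  "has_odd_component EE W \<longleftrightarrow> W \<noteq> {} \<and> (odd (card W) \<or> single_part W)"
proof (cases "single_part W")
  case True
  have "has_odd_component EE W \<longleftrightarrow> (\<exists>v\<in>W. odd (card (component EE W v)))"
    by (simp add: has_odd_component_def)
  also have "\<dots> \<longleftrightarrow> (\<exists>v\<in>W. odd (card {v}))" using comp_single[OF True] by simp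
  also have "\<dots> \<longleftrightarrow> W \<noteq> {}" by auto
  finally show ?thesis using True by simp
next
  case False
  then have ne: "W \<noteq> {}" by (auto simp: single_part_def)
  have "has_odd_component EE W \<longleftrightarrow> (\<exists>v\<in>W. odd (card (component EE W v)))"
    by (simp add: has_odd_component_def)
  also have "\<dots> \<longleftrightarrow> (\<exists>v\<in>W. odd (card W))" using comp_multi[OF False] by simp
  also have "\<dots> \<longleftrightarrow> odd (card W)" using ne by auto
  finally show ?thesis using False ne by simp
qed

lemma single_part_image:
  assumes "\<forall>u\<in>W. \<forall>v\<in>W. fst (h u) = fst (h v) \<longleftrightarrow> fst u = fst v"
  shows "single_part (h ` W) \<longleftrightarrow> single_part W"
proof (cases "W = {}")
  case True then show ?thesis by (simp add: single_part_def)
next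
  case False
  then obtain w where w: "w \<in> W" by auto
  have "single_part W \<longleftrightarrow> (\<forall>u\<in>W. fst u = fst w)"
  proof
    assume "single_part W" then obtain i where "\<forall>u\<in>W. fst u = i" unfolding single_part_def by blast
    then show "\<forall>u\<in>W. fst u = fst w" using w by simp
  qed (auto simp: single_part_def)
  moreover have "single_part (h ` W) \<longleftrightarrow> (\<forall>u\<in>W. fst (h u) = fst (h w))" using w by (auto simp: single_part_def)
  ultimately show ?thesis using assms w by auto
qed

lemma sa_iso:
  assumes "finite W" "bij_betw h W W'" "\<forall>u\<in>W. \<forall>v\<in>W. fst (h u) = fst (h v) \<longleftrightarrow> fst u = fst v"
  shows "sa EE W' = sa EE W"
  using assms
proof (induction "card W" arbitrary: W W' h rule: less_induct)
  case less
  have W': "W' = h ` W" using less.prems(2) by (simp add: bij_betw_def)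
  have inj: "inj_on h W" using less.prems(2) by (simp add: bij_betw_def)
  have fin': "finite W'" using W' less.prems(1) by simp
  have crd: "card W' = card W" using bij_betw_same_card[OF less.prems(2)] by simp
  have emp: "W' = {} \<longleftrightarrow> W = {}" using W' by simp
  have odd: "has_odd_component EE W' \<longleftrightarrow> has_odd_component EE W"
    unfolding odd_char crd emp single_part_image[OF less.prems(3), folded W'] ..
  have sets: "{W2. W2 \<subset> W'} = (image h) ` {W1. W1 \<subset> W}"
  proof
    show "{W2. W2 \<subset> W'} \<subseteq> (image h) ` {W1. W1 \<subset> W}"
    proof
      fix W2 assume "W2 \<in> {W2. W2 \<subset> W'}"
      then have W2: "W2 \<subset> h ` W" using W' by simp
      have e: "W2 = h ` (W \<inter> h -` W2)" using W2 by blast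
      have s: "W \<inter> h -` W2 \<subseteq> W" by blast
      have "W \<inter> h -` W2 \<noteq> W"
      proof
        assume "W \<inter> h -` W2 = W"
        then have "W2 = h ` W" using e by simp
        then show False using W2 by simp
      qed
      then have "W \<inter> h -` W2 \<subset> W" using s by blast
      then show "W2 \<in> (image h) ` {W1. W1 \<subset> W}" using e by blast
    qed
  next
    show "(image h) ` {W1. W1 \<subset> W} \<subseteq> {W2. W2 \<subset> W'}"
    proof
      fix W2 assume "W2 \<in> (image h) ` {W1. W1 \<subset> W}"
      then obtain W1 where W1: "W1 \<subset> W" "W2 = h ` W1" by blast
      have "h ` W1 \<subseteq> h ` W" using W1 by blast
      moreover have "h ` W1 \<noteq> h ` W"
        using inj_on_image_eq_iff[OF inj, of W1 W] W1(1) by blast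
      ultimately show "W2 \<in> {W2. W2 \<subset> W'}" using W1 W' by blast
    qed
  qed
  have injP: "inj_on (image h) {W1. W1 \<subset> W}"
    using inj_on_image_Pow[OF inj] by (rule inj_on_subset) auto
  have IH: "sa EE (h ` W1) = sa EE W1" if "W1 \<subset> W" for W1
  proof (rule less.hyps)
    show "card W1 < card W" using that less.prems(1) by (simp add: psubset_card_mono)
    show "finite W1" using that less.prems(1) by (meson finite_subset psubset_imp_subset)
    have "inj_on h W1" using inj that by (rule inj_on_subset[OF _ psubset_imp_subset])
    then show "bij_betw h W1 (h ` W1)" by (rule inj_on_imp_bij_betw)
    show "\<forall>u\<in>W1. \<forall>v\<in>W1. fst (h u) = fst (h v) \<longleftrightarrow> fst u = fst v" using that less.prems(3) psubset_imp_subset by (meson subsetD)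
  qed
  have sums: "(\<Sum>W2\<in>{W2. W2 \<subset> W'}. sa EE W2) = (\<Sum>W1\<in>{W1. W1 \<subset> W}. sa EE W1)"
    unfolding sets by (subst sum.reindex[OF injP]) (simp add: IH)
  have "sa EE W' = (if \<not> finite W' then 0 else if W' = {} then 1
             else if has_odd_component EE W' then 0
             else - (\<Sum>W2\<in>{W2. W2 \<subset> W'}. sa EE W2))" by (rule sa.simps)
  also have "\<dots> = (if \<not> finite W then 0 else if W = {} then 1
             else if has_odd_component EE W then 0
             else - (\<Sum>W1\<in>{W1. W1 \<subset> W}. sa EE W1))" using fin' less.prems(1) emp odd sums by simp
  also have "\<dots> = sa EE W" by (rule sa.simps[symmetric])
  finally show ?case .
qed

definition cnt :: "(nat \<times> nat) set \<Rightarrow> nat \<Rightarrow> nat" where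
  "cnt W = (\<lambda>i. card {j. (i, j) \<in> W})"

lemma sa_canon:
  assumes fin: "finite W" and sub: "\<forall>u\<in>W. fst u < m"
  shows "sa EE W = sa EE (multipartite_vertices m (cnt W))"
proof -
  define S where "S i = {j. (i, j) \<in> W}" for i
  have finS: "finite (S i)" for i
  proof -
    have "S i \<subseteq> snd ` W" by (force simp: S_def)
    then show ?thesis using fin finite_subset by blast
  qed
  have "\<forall>i. \<exists>h. bij_betw h (S i) {0..<card (S i)}" using finS ex_bij_betw_finite_nat by blast
  then obtain hh where hh: "\<And>i. bij_betw (hh i) (S i) {0..<card (S i)}" by metis
  define H where "H u = (fst u, hh (fst u) (snd u))" for u
  have bij: "bij_betw H W (multipartite_vertices m (cnt W))"
    unfolding bij_betw_def
  proof
    show "inj_on H W"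
    proof (rule inj_onI)
      fix u v assume uv: "u \<in> W" "v \<in> W" "H u = H v"
      obtain i j where u: "u = (i, j)" by fastforce
      obtain i' j' where v: "v = (i', j')" by fastforce
      have ii: "i' = i" using uv u v by (simp add: H_def)
      have "j \<in> S i" "j' \<in> S i" using uv u v ii by (auto simp: S_def)
      moreover have "hh i j = hh i j'" using uv u v ii by (simp add: H_def)
      ultimately have "j = j'" using hh[of i] by (auto simp: bij_betw_def inj_on_def)
      then show "u = v" using u v ii by simp
    qed
  next
    show "H ` W = multipartite_vertices m (cnt W)"
    proof
      show "H ` W \<subseteq> multipartite_vertices m (cnt W)"
      proof
        fix z assume "z \<in> H ` W"
        then obtain i j where ij: "(i, j) \<in> W" "z = H (i, j)" by auto
        have "j \<in> S i" using ij by (simp add: S_def)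
        then have "hh i j < card (S i)" using hh[of i] by (auto simp: bij_betw_def)
        then show "z \<in> multipartite_vertices m (cnt W)"
          using ij sub by (auto simp: H_def multipartite_vertices_def cnt_def S_def)
      qed
    next
      show "multipartite_vertices m (cnt W) \<subseteq> H ` W"
      proof
        fix z assume "z \<in> multipartite_vertices m (cnt W)"
        then obtain i k where z: "z = (i, k)" "k < card (S i)"
          by (auto simp: multipartite_vertices_def cnt_def S_def)
        then have "k \<in> hh i ` S i" using hh[of i] by (auto simp: bij_betw_def)
        then obtain j where "j \<in> S i" "hh i j = k" by auto
        then show "z \<in> H ` W" using z by (auto simp: S_def H_def image_iff intro!: bexI[of _ "(i, j)"])
      qed
    qed
  qed
  have "sa EE (multipartite_vertices m (cnt W)) = sa EE W"
    by (rule sa_iso[OF fin bij]) (simp add: H_def)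
  then show ?thesis by simp
qed



lemma MV_Sigma: "multipartite_vertices m p = Sigma {..<m} (\<lambda>i. {..<p i})"
  by (auto simp: multipartite_vertices_def)

lemma finite_MV[simp]: "finite (multipartite_vertices m p)"
  by (simp add: MV_Sigma)

lemma card_MV: "card (multipartite_vertices m p) = tot m p"
  by (simp add: MV_Sigma tot_def)

lemma sub_Sigma:
  assumes "W \<subseteq> multipartite_vertices m p"
  shows "W = Sigma {..<m} (\<lambda>i. {j. (i, j) \<in> W})"
  using assms by (auto simp: multipartite_vertices_def)

lemma slice_sub:
  assumes "W \<subseteq> multipartite_vertices m p"
  shows "{j. (i, j) \<in> W} \<subseteq> (if i < m then {..<p i} else {})"
  using assms by (auto simp: multipartite_vertices_def)

lemma card_sub:
  assumes "W \<subseteq> multipartite_vertices m p"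
  shows "card W = tot m (cnt W)"
proof -
  have fin: "finite {j. (i, j) \<in> W}" for i
    by (rule finite_subset[OF slice_sub[OF assms, of i]]) simp
  have "card W = card (Sigma {..<m} (\<lambda>i. {j. (i, j) \<in> W}))" using sub_Sigma[OF assms] by simp
  also have "\<dots> = tot m (cnt W)" using fin by (simp add: tot_def cnt_def)
  finally show ?thesis .
qed

lemma cnt_le:
  assumes "W \<subseteq> multipartite_vertices m p" "p \<in> DD m"
  shows "cnt W i \<le> p i"
proof (cases "i < m")
  case True
  then have "{j. (i, j) \<in> W} \<subseteq> {..<p i}" using slice_sub[OF assms(1), of i] by simp
  then show ?thesis unfolding cnt_def by (metis card_lessThan card_mono finite_lessThan)
next
  case False
  then have "{j. (i, j) \<in> W} = {}" using slice_sub[OF assms(1), of i] by simp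
  then show ?thesis by (simp add: cnt_def)
qed

lemma card_fiber:
  assumes p: "p \<in> DD m" and q: "\<forall>i. q i \<le> p i"
  shows "card {W \<in> Pow (multipartite_vertices m p). cnt W = q} = (\<Prod>i<m. p i choose q i)"
proof -
  let ?A = "{W \<in> Pow (multipartite_vertices m p). cnt W = q}"
  let ?B = "Pi\<^sub>E {..<m} (\<lambda>i. {S. S \<subseteq> {..<p i} \<and> card S = q i})"
  define f where "f W = restrict (\<lambda>i. {j. (i, j) \<in> W}) {..<m}" for W :: "(nat \<times> nat) set"
  define f' where "f' F = {(i, j). i < m \<and> j \<in> F i}" for F :: "nat \<Rightarrow> nat set"
  have qz: "q i = 0" if "i \<ge> m" for i
  proof -
    have "p i = 0" using p that by (simp add: DD_def)
    then show ?thesis using q[rule_format, of i] by simp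
  qed
  have "bij_betw f ?A ?B"
  proof (rule bij_betw_byWitness[where f'=f'])
    show "\<forall>a\<in>?A. f' (f a) = a"
    proof
      fix a assume "a \<in> ?A"
      then have a: "a \<subseteq> multipartite_vertices m p" by simp
      have "f' (f a) = {(i, j). i < m \<and> (i, j) \<in> a}"
        unfolding f'_def f_def by (auto simp: restrict_def)
      also have "\<dots> = a" using a by (auto simp: multipartite_vertices_def)
      finally show "f' (f a) = a" .
    qed
    show "\<forall>a'\<in>?B. f (f' a') = a'"
    proof
      fix F assume F: "F \<in> ?B"
      show "f (f' F) = F"
      proof
        fix i show "f (f' F) i = F i"
        proof (cases "i < m")
          case True
          then show ?thesis by (simp add: f_def f'_def)
        next
          case False
          then have "F i = undefined" using F by (simp add: PiE_def extensional_def)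
          then show ?thesis using False by (simp add: f_def)
        qed
      qed
    qed
    show "f ` ?A \<subseteq> ?B"
    proof
      fix F assume "F \<in> f ` ?A"
      then obtain W where W: "W \<subseteq> multipartite_vertices m p" "cnt W = q" "F = f W" by auto
      have "{j. (i, j) \<in> W} \<subseteq> {..<p i} \<and> card {j. (i, j) \<in> W} = q i" if "i < m" for i
        using slice_sub[OF W(1), of i] that W(2) by (auto simp: cnt_def)
      then show "F \<in> ?B" using W(3) by (simp add: f_def)
    qed
    show "f' ` ?B \<subseteq> ?A"
    proof
      fix W assume "W \<in> f' ` ?B"
      then obtain F where F: "F \<in> ?B" "W = f' F" by auto
      have "W \<subseteq> multipartite_vertices m p" using F by (auto simp: f'_def multipartite_vertices_def)
      moreover have "cnt W = q"
      proof
        fix i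
        show "cnt W i = q i"
        proof (cases "i < m")
          case True
          then have "{j. (i, j) \<in> W} = F i" using F by (auto simp: f'_def)
          then show ?thesis using F True by (auto simp: cnt_def)
        next
          case False
          then have "{j. (i, j) \<in> W} = {}" using F by (auto simp: f'_def)
          then show ?thesis using False qz by (simp add: cnt_def)
        qed
      qed
      ultimately show "W \<in> ?A" by simp
    qed
  qed
  then have "card ?A = card ?B" by (rule bij_betw_same_card)
  also have "\<dots> = (\<Prod>i<m. card {S. S \<subseteq> {..<p i} \<and> card S = q i})" by (simp add: card_PiE)
  also have "\<dots> = (\<Prod>i<m. p i choose q i)" by (simp add: n_subsets)
  finally show ?thesis .
qed

lemma group_cnt:
  fixes h :: "(nat \<Rightarrow> nat) \<Rightarrow> real"
  assumes p: "p \<in> DD m"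
  shows "(\<Sum>W\<in>Pow (multipartite_vertices m p). h (cnt W)) =
         (\<Sum>q\<in>{q. \<forall>i. q i \<le> p i}. real (\<Prod>i<m. p i choose q i) * h q)"
proof -
  have "(\<Sum>W\<in>Pow (multipartite_vertices m p). h (cnt W)) =
      (\<Sum>q\<in>{q. \<forall>i. q i \<le> p i}. \<Sum>W\<in>{W \<in> Pow (multipartite_vertices m p). cnt W = q}. h (cnt W))"
    by (rule sum.group[symmetric]) (use finite_below[OF p] cnt_le[OF _ p] in auto)
  also have "\<dots> = (\<Sum>q\<in>{q. \<forall>i. q i \<le> p i}. real (\<Prod>i<m. p i choose q i) * h q)"
  proof (rule sum.cong[OF refl])
    fix q assume "q \<in> {q. \<forall>i. q i \<le> p i}"
    then have "card {W \<in> Pow (multipartite_vertices m p). cnt W = q} = (\<Prod>i<m. p i choose q i)"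
      using card_fiber[OF p] by simp
    moreover have "(\<Sum>W\<in>{W \<in> Pow (multipartite_vertices m p). cnt W = q}. h (cnt W)) =
        (\<Sum>W\<in>{W \<in> Pow (multipartite_vertices m p). cnt W = q}. h q)" by (rule sum.cong) auto
    ultimately show "(\<Sum>W\<in>{W \<in> Pow (multipartite_vertices m p). cnt W = q}. h (cnt W)) =
        real (\<Prod>i<m. p i choose q i) * h q" by simp
  qed
  finally show ?thesis .
qed

definition aa :: "nat \<Rightarrow> (nat \<Rightarrow> nat) \<Rightarrow> real" where
  "aa m q = real_of_int (sa EE (multipartite_vertices m q))"

lemma sa_sub:
  assumes "W \<subseteq> multipartite_vertices m p"
  shows "real_of_int (sa EE W) = aa m (cnt W)"
proof -
  have "finite W" using assms finite_MV finite_subset by blast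
  moreover have "\<forall>u\<in>W. fst u < m" using assms by (auto simp: multipartite_vertices_def)
  ultimately show ?thesis by (simp add: aa_def sa_canon)
qed

lemma group_sa:
  fixes h :: "nat \<Rightarrow> real"
  assumes p: "p \<in> DD m"
  shows "(\<Sum>W\<in>Pow (multipartite_vertices m p). real_of_int (sa EE W) * h (card (multipartite_vertices m p - W))) =
         (\<Sum>q\<in>{q. \<forall>i. q i \<le> p i}. real (\<Prod>i<m. p i choose q i) * (aa m q * h (tot m p - tot m q)))"
proof -
  have "(\<Sum>W\<in>Pow (multipartite_vertices m p). real_of_int (sa EE W) * h (card (multipartite_vertices m p - W))) =
        (\<Sum>W\<in>Pow (multipartite_vertices m p). (\<lambda>q. aa m q * h (tot m p - tot m q)) (cnt W))"
  proof (rule sum.cong[OF refl])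
    fix W assume "W \<in> Pow (multipartite_vertices m p)"
    then have W: "W \<subseteq> multipartite_vertices m p" by simp
    have "card (multipartite_vertices m p - W) = tot m p - tot m (cnt W)"
      using W by (simp add: card_Diff_subset finite_subset card_MV card_sub)
    then show "real_of_int (sa EE W) * h (card (multipartite_vertices m p - W)) =
        (\<lambda>q. aa m q * h (tot m p - tot m q)) (cnt W)" using sa_sub[OF W] by simp
  qed
  also have "\<dots> = (\<Sum>q\<in>{q. \<forall>i. q i \<le> p i}. real (\<Prod>i<m. p i choose q i) * (aa m q * h (tot m p - tot m q)))"
    by (rule group_cnt[OF p])
  finally show ?thesis .
qed



lemma sa_zero:
  assumes "finite W" "W \<noteq> {}" "odd (card W) \<or> single_part W"
  shows "sa EE W = 0"
proof -
  have "has_odd_component EE W" using assms by (simp add: odd_char)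
  then show ?thesis using assms by (subst sa.simps) simp
qed

lemma single_part_mono:
  assumes "single_part V" "W \<subseteq> V" shows "single_part W"
proof -
  obtain i where i: "\<forall>u\<in>V. fst u = i" using assms(1) unfolding single_part_def by blast
  then have "\<forall>u\<in>W. fst u = i" using assms(2) by auto
  then show ?thesis unfolding single_part_def by (rule exI)
qed

lemma tot_single:
  assumes "i < m" "\<forall>j. j \<noteq> i \<longrightarrow> p j = 0"
  shows "tot m p = p i"
proof -
  have "tot m p = (\<Sum>j<m. if j = i then p i else 0)"
    unfolding tot_def by (rule sum.cong) (use assms in auto)
  also have "\<dots> = p i" using assms by simp
  finally show ?thesis .
qed

lemma Tn_nonzero:
  assumes "p \<in> DD m" "p k \<noteq> 0"
  shows "Tn m p = (if (\<forall>j. j \<noteq> k \<longrightarrow> p j = 0) \<and> even (p k) then 1 else 0)"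
proof -
  have km: "k < m"
  proof (rule ccontr)
    assume "\<not> k < m" then have "p k = 0" using assms(1) by (simp add: DD_def)
    then show False using assms(2) by simp
  qed
  have pn: "p \<noteq> (\<lambda>_. 0)" using assms by auto
  have "(\<Sum>i<m. if (\<forall>j. j \<noteq> i \<longrightarrow> p j = 0) \<and> even (p i) then 1 else 0 :: real) =
        (\<Sum>i<m. if i = k then (if (\<forall>j. j \<noteq> k \<longrightarrow> p j = 0) \<and> even (p k) then 1 else 0) else 0)"
  proof (rule sum.cong[OF refl])
    fix i assume "i \<in> {..<m}"
    show "(if (\<forall>j. j \<noteq> i \<longrightarrow> p j = 0) \<and> even (p i) then 1 else 0 :: real) =
        (if i = k then (if (\<forall>j. j \<noteq> k \<longrightarrow> p j = 0) \<and> even (p k) then 1 else 0) else 0)"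
    proof (cases "i = k")
      case False
      then have "\<not> (\<forall>j. j \<noteq> i \<longrightarrow> p j = 0)" using assms(2) by auto
      then show ?thesis using False by simp
    qed simp
  qed
  also have "\<dots> = (if (\<forall>j. j \<noteq> k \<longrightarrow> p j = 0) \<and> even (p k) then 1 else 0)" using km by simp
  finally show ?thesis using pn by (simp add: Tn_def)
qed

lemma DD_lt:
  assumes p: "p \<in> DD m" and "p j \<noteq> 0" shows "j < m"
proof (rule ccontr)
  assume "\<not> j < m" then have "p j = 0" using p by (simp add: DD_def)
  then show False using assms(2) by simp
qed

lemma sp1:
  assumes p: "p \<in> DD m" and k: "p k \<noteq> 0" and sp: "single_part (multipartite_vertices m p)"
  shows "\<forall>j. j \<noteq> k \<longrightarrow> p j = 0"
proof -
  obtain i where i: "\<forall>u\<in>multipartite_vertices m p. fst u = i" using sp unfolding single_part_def by blast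
  have mem: "(j, 0) \<in> multipartite_vertices m p" if "p j \<noteq> 0" for j
    using DD_lt[OF p that] that by (simp add: multipartite_vertices_def)
  have ji: "j = i" if "p j \<noteq> 0" for j using i mem[OF that] by fastforce
  show ?thesis
  proof (intro allI impI)
    fix j assume "j \<noteq> k"
    show "p j = 0"
    proof (rule ccontr)
      assume "p j \<noteq> 0"
      then have "j = i" by (rule ji)
      moreover have "k = i" using k by (rule ji)
      ultimately show False using \<open>j \<noteq> k\<close> by simp
    qed
  qed
qed
lemma sp2:
  assumes h: "\<forall>j. j \<noteq> k \<longrightarrow> p j = 0"
  shows "single_part (multipartite_vertices m p)"
proof -
  have "fst u = k" if "u \<in> multipartite_vertices m p" for u
  proof -
    obtain a b where u: "u = (a, b)" by fastforce
    have "b < p a" using that u by (simp add: multipartite_vertices_def)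
    then have "p a \<noteq> 0" by simp
    then have "a = k" using h by (cases "a = k") auto
    then show ?thesis using u by simp
  qed
  then have "\<forall>u\<in>multipartite_vertices m p. fst u = k" by (intro ballI)
  then show ?thesis unfolding single_part_def by (rule exI)
qed

lemma sp_char:
  assumes p: "p \<in> DD m" and k: "p k \<noteq> 0"
  shows "single_part (multipartite_vertices m p) \<longleftrightarrow> (\<forall>j. j \<noteq> k \<longrightarrow> p j = 0)"
  using sp1[OF p k] sp2 by blast

lemma parity_set:
  assumes p: "p \<in> DD m"
  shows "(\<Sum>W\<in>Pow (multipartite_vertices m p). real_of_int (sa EE W) *
            (if even (card (multipartite_vertices m p - W)) then 1 else 0)) = Tn m p"
proof (cases "p = (\<lambda>_. 0)")
  case True
  then have V: "multipartite_vertices m p = {}" by (simp add: multipartite_vertices_def)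
  have "sa EE {} = 1" by (subst sa.simps) simp
  moreover have "Tn m p = 1" using True by (simp add: Tn_def)
  ultimately show ?thesis using V by simp
next
  case False
  let ?V = "multipartite_vertices m p"
  obtain k where k: "p k \<noteq> 0" using False by auto
  have km: "k < m"
  proof (rule ccontr)
    assume "\<not> k < m" then have "p k = 0" using p by (simp add: DD_def)
    then show False using k by simp
  qed
  have kV: "(k, 0) \<in> ?V" using km k by (simp add: multipartite_vertices_def)
  then have Vne: "?V \<noteq> {}" by auto
  have cV: "card ?V = tot m p" by (rule card_MV)
  have Tn: "Tn m p = (if (\<forall>j. j \<noteq> k \<longrightarrow> p j = 0) \<and> even (p k) then 1 else 0)"
    by (rule Tn_nonzero[OF p k])
  have sp: "single_part ?V \<longleftrightarrow> (\<forall>j. j \<noteq> k \<longrightarrow> p j = 0)" by (rule sp_char[OF p k])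
  have finW: "finite W" if "W \<subseteq> ?V" for W using that finite_MV by (rule finite_subset)
  have cardle: "card W \<le> card ?V" if "W \<subseteq> ?V" for W using that finite_MV by (rule card_mono[rotated])
  have cardW: "card (?V - W) + card W = card ?V" if "W \<subseteq> ?V" for W
  proof -
    have "card (?V - W) = card ?V - card W" using that finW[OF that] by (rule card_Diff_subset[rotated])
    then show ?thesis using cardle[OF that] by simp
  qed
  show ?thesis
  proof (cases "even (card ?V)")
    case False
    have "real_of_int (sa EE W) * (if even (card (?V - W)) then 1 else 0) = 0" if "W \<in> Pow ?V" for W
    proof (cases "even (card (?V - W))")
      case True
      have "card (?V - W) + card W = card ?V" using that cardW by simp
      then have "odd (card W)" using False True by (metis even_add)
      then have "W \<noteq> {}" by auto
      then have "sa EE W = 0" using sa_zero finW that \<open>odd (card W)\<close> by auto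
      then show ?thesis by simp
    qed simp
    then have "(\<Sum>W\<in>Pow ?V. real_of_int (sa EE W) * (if even (card (?V - W)) then 1 else 0)) = 0"
      by (intro sum.neutral ballI)
    moreover have "Tn m p = 0"
    proof -
      have "\<not> ((\<forall>j. j \<noteq> k \<longrightarrow> p j = 0) \<and> even (p k))"
      proof
        assume H: "(\<forall>j. j \<noteq> k \<longrightarrow> p j = 0) \<and> even (p k)"
        then have "tot m p = p k" using tot_single[OF km, of p] by simp
        then show False using False cV H by simp
      qed
      then show ?thesis using Tn by simp
    qed
    ultimately show ?thesis by simp
  next
    case True
    have tm: "real_of_int (sa EE W) * (if even (card (?V - W)) then 1 else 0) = real_of_int (sa EE W)"
      if "W \<in> Pow ?V" for W
    proof (cases "even (card W)")
      case True
      have "card (?V - W) + card W = card ?V" using that cardW by simp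
      then have "even (card (?V - W))" using \<open>even (card ?V)\<close> True by (metis even_add)
      then show ?thesis by simp
    next
      case False
      then have "W \<noteq> {}" by auto
      then have "sa EE W = 0" using sa_zero finW that False by auto
      then show ?thesis by simp
    qed
    have S: "(\<Sum>W\<in>Pow ?V. real_of_int (sa EE W) * (if even (card (?V - W)) then 1 else 0)) =
          (\<Sum>W\<in>Pow ?V. real_of_int (sa EE W))" using tm by (rule sum.cong[OF refl])
    show ?thesis
    proof (cases "single_part ?V")
      case sp1: True
      have z: "real_of_int (sa EE W) = 0" if "W \<in> Pow ?V - {{}}" for W
      proof -
        have "single_part W" using single_part_mono[OF sp1] that by simp
        then show ?thesis using sa_zero[of W] finW that by auto
      qed
      have "(\<Sum>W\<in>Pow ?V. real_of_int (sa EE W)) = real_of_int (sa EE {}) + (\<Sum>W\<in>Pow ?V - {{}}. real_of_int (sa EE W))"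
        by (subst sum.remove[of _ "{}"]) auto
      also have "\<dots> = 1" using z by (subst sa.simps) simp
      finally have "(\<Sum>W\<in>Pow ?V. real_of_int (sa EE W)) = 1" .
      moreover have "Tn m p = 1"
      proof -
        have H: "\<forall>j. j \<noteq> k \<longrightarrow> p j = 0" using sp sp1 by simp
        then have "tot m p = p k" using tot_single[OF km, of p] by simp
        then have "even (p k)" using True cV by simp
        then show ?thesis using Tn H by simp
      qed
      ultimately show ?thesis using S by simp
    next
      case sp0: False
      have nodd: "\<not> has_odd_component EE ?V" using sp0 True by (simp add: odd_char)
      have saV: "sa EE ?V = - (\<Sum>W\<in>{W. W \<subset> ?V}. sa EE W)"
        using nodd Vne by (subst sa.simps) simp
      have PV: "Pow ?V = insert ?V {W. W \<subset> ?V}" by auto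
      have finP: "finite {W. W \<subset> ?V}"
        by (rule finite_subset[of _ "Pow ?V"]) auto
      have "(\<Sum>W\<in>Pow ?V. real_of_int (sa EE W)) = real_of_int (sa EE ?V) + (\<Sum>W\<in>{W. W \<subset> ?V}. real_of_int (sa EE W))"
        unfolding PV using finP by (subst sum.insert) auto
      also have "\<dots> = 0" unfolding saV by (simp add: of_int_sum)
      finally have "(\<Sum>W\<in>Pow ?V. real_of_int (sa EE W)) = 0" .
      moreover have "Tn m p = 0" using Tn sp sp0 by simp
      ultimately show ?thesis using S by simp
    qed
  qed
qed

lemma parity_q:
  assumes p: "p \<in> DD m"
  shows "(\<Sum>q\<in>{q. \<forall>i. q i \<le> p i}. real (\<Prod>i<m. p i choose q i) *
            (aa m q * (if even (tot m p - tot m q) then 1 else 0))) = Tn m p"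
  using group_sa[OF p, of "\<lambda>n. if even n then 1 else 0"] parity_set[OF p] by simp

lemma sa_poly_q:
  assumes p: "p \<in> DD m"
  shows "sa_poly EE (multipartite_vertices m p) t =
     (\<Sum>q\<in>{q. \<forall>i. q i \<le> p i}. real (\<Prod>i<m. p i choose q i) * (aa m q * t ^ (tot m p - tot m q)))"
  using group_sa[OF p, of "\<lambda>n. t ^ n"] by (simp add: sa_poly_def)



lemma sum_pow2_le: "(\<Sum>k<n. (2::nat) ^ k) \<le> 2 ^ n"
  by (induction n) auto

lemma binom_fact_le: "k \<le> n \<Longrightarrow> (n choose k) * fact k \<le> (fact n :: nat)"
proof -
  assume "k \<le> n"
  then have "fact k * fact (n - k) * (n choose k) = (fact n :: nat)" by (rule binomial_fact_lemma)
  moreover have "(1::nat) \<le> fact (n - k)" by (simp add: fact_ge_1)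
  ultimately show ?thesis
    by (metis le_add2 mult.assoc mult.commute mult_le_mono2 nat_mult_1_right)
qed

lemma sum_subsets_bound:
  assumes fin: "finite W"
  shows "(\<Sum>W'\<in>{W'. W' \<subset> W}. fact (card W') * 2 ^ card W') \<le> (fact (card W) * 2 ^ card W :: nat)"
proof -
  let ?n = "card W"
  let ?P = "{W'. W' \<subset> W}"
  have finP: "finite ?P" by (rule finite_subset[of _ "Pow W"]) (use fin in auto)
  have "(\<Sum>W'\<in>?P. fact (card W') * 2 ^ card W') =
        (\<Sum>k\<in>{..<?n}. \<Sum>W'\<in>{W' \<in> ?P. card W' = k}. fact (card W') * 2 ^ card W')"
    by (rule sum.group[symmetric]) (use finP fin psubset_card_mono in auto)
  also have "\<dots> = (\<Sum>k\<in>{..<?n}. card {W' \<in> ?P. card W' = k} * (fact k * 2 ^ k))"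
    by (rule sum.cong[OF refl]) simp
  also have "\<dots> \<le> (\<Sum>k\<in>{..<?n}. (?n choose k) * (fact k * 2 ^ k))"
  proof (rule sum_mono)
    fix k assume "k \<in> {..<?n}"
    have "card {W' \<in> ?P. card W' = k} \<le> card {B. B \<subseteq> W \<and> card B = k}"
    proof (rule card_mono)
      show "finite {B. B \<subseteq> W \<and> card B = k}" by (rule finite_subset[of _ "Pow W"]) (use fin in auto)
    qed auto
    also have "\<dots> = ?n choose k" by (rule n_subsets[OF fin])
    finally show "card {W' \<in> ?P. card W' = k} * (fact k * 2 ^ k) \<le> (?n choose k) * (fact k * 2 ^ k)"
      by (rule mult_le_mono1)
  qed
  also have "\<dots> \<le> (\<Sum>k\<in>{..<?n}. fact ?n * 2 ^ k)"
  proof (rule sum_mono)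
    fix k assume "k \<in> {..<?n}"
    then have "(?n choose k) * fact k \<le> fact ?n" by (intro binom_fact_le) simp
    then show "(?n choose k) * (fact k * 2 ^ k) \<le> fact ?n * 2 ^ k"
      by (metis mult.assoc mult_le_mono1)
  qed
  also have "\<dots> = fact ?n * (\<Sum>k<?n. 2 ^ k)" by (simp add: sum_distrib_left)
  also have "\<dots> \<le> fact ?n * 2 ^ ?n" by (rule mult_le_mono2[OF sum_pow2_le])
  finally show ?thesis .
qed

lemma sa_bound:
  assumes "finite W"
  shows "\<bar>sa E W\<bar> \<le> int (fact (card W) * 2 ^ card W)"
  using assms
proof (induction "card W" arbitrary: W rule: less_induct)
  case less
  show ?case
  proof (cases "W = {} \<or> has_odd_component E W")
    case True
    then show ?thesis using less.prems by (subst sa.simps) auto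
  next
    case False
    then have eq: "sa E W = - (\<Sum>W'\<in>{W'. W' \<subset> W}. sa E W')"
      using less.prems by (subst sa.simps) simp
    have "\<bar>sa E W\<bar> \<le> (\<Sum>W'\<in>{W'. W' \<subset> W}. \<bar>sa E W'\<bar>)"
      unfolding eq abs_minus_cancel by (rule sum_abs)
    also have "\<dots> \<le> (\<Sum>W'\<in>{W'. W' \<subset> W}. int (fact (card W') * 2 ^ card W'))"
    proof (rule sum_mono)
      fix W' assume "W' \<in> {W'. W' \<subset> W}"
      then have "W' \<subset> W" by simp
      moreover have fW': "finite W'" by (rule finite_subset[OF psubset_imp_subset[OF \<open>W' \<subset> W\<close>] less.prems(1)])
      ultimately show "\<bar>sa E W'\<bar> \<le> int (fact (card W') * 2 ^ card W')"
        using less.hyps[OF psubset_card_mono[OF less.prems(1) \<open>W' \<subset> W\<close>] fW'] by simp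
    qed
    also have "\<dots> = int (\<Sum>W'\<in>{W'. W' \<subset> W}. fact (card W') * 2 ^ card W')" by simp
    also have "\<dots> \<le> int (fact (card W) * 2 ^ card W)"
      using sum_subsets_bound[OF less.prems] by linarith
    finally show ?thesis .
  qed
qed

lemma fact_add_le: "fact (a + b) \<le> 2 ^ (a + b) * (fact a * (fact b :: nat))"
proof -
  have "fact a * fact (a + b - a) * (a + b choose a) = (fact (a + b) :: nat)" by (rule binomial_fact_lemma) simp
  then have e: "fact (a + b) = (a + b choose a) * (fact a * fact b :: nat)" by (simp add: ac_simps)
  show ?thesis unfolding e by (rule mult_le_mono1[OF binomial_le_pow2])
qed

lemma fact_tot_bound: "fact (tot m q) \<le> 2 ^ (m * tot m q) * (\<Prod>i<m. fact (q i) :: nat)"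
proof (induction m)
  case 0 then show ?case by (simp add: tot_def)
next
  case (Suc m)
  let ?s = "tot m q" and ?P = "\<Prod>i<m. fact (q i) :: nat"
  have t: "tot (Suc m) q = ?s + q m" by (simp add: tot_def)
  have "fact (?s + q m) \<le> (2::nat) ^ (?s + q m) * (fact ?s * fact (q m))" by (rule fact_add_le)
  also have "\<dots> \<le> 2 ^ (?s + q m) * ((2 ^ (m * ?s) * ?P) * fact (q m))"
    using Suc.IH by (intro mult_le_mono2 mult_le_mono1)
  also have "\<dots> = 2 ^ (?s + q m + m * ?s) * (?P * fact (q m))" by (simp add: power_add ac_simps)
  also have "\<dots> \<le> 2 ^ (Suc m * (?s + q m)) * (?P * fact (q m))"
    by (intro mult_le_mono1 power_increasing) (auto simp: algebra_simps)
  finally show ?case by (simp add: t mult.commute)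
qed

lemma aa_bound: "\<bar>aa m q\<bar> \<le> 2 ^ ((m + 1) * tot m q) * (\<Prod>i<m. fact (q i))"
proof -
  have b: "\<bar>sa EE (multipartite_vertices m q)\<bar> \<le> int (fact (tot m q) * 2 ^ tot m q)"
    using sa_bound[OF finite_MV, of EE m q] unfolding card_MV .
  have "\<bar>aa m q\<bar> = real_of_int \<bar>sa EE (multipartite_vertices m q)\<bar>" by (simp add: aa_def)
  also have "\<dots> \<le> real_of_int (int (fact (tot m q) * 2 ^ tot m q))" using b by (rule of_int_le_iff[THEN iffD2])
  finally have "\<bar>aa m q\<bar> \<le> real (fact (tot m q) * 2 ^ tot m q)" by simp
  also have "\<dots> \<le> real (2 ^ (m * tot m q) * (\<Prod>i<m. fact (q i)) * 2 ^ tot m q)"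
    using fact_tot_bound[of m q] by (intro of_nat_mono mult_le_mono1)
  also have "\<dots> = 2 ^ ((m + 1) * tot m q) * (\<Prod>i<m. fact (q i))"
    by (simp add: power_add algebra_simps of_nat_prod)
  finally show ?thesis .
qed

lemma geom_has_sum:
  assumes "0 \<le> z" "z < (1::real)"
  shows "((\<lambda>n. z ^ n) has_sum 1 / (1 - z)) UNIV"
  using sums_nonneg_imp_has_sum[OF geometric_sums] assms by simp

lemma aX_summable:
  assumes x: "\<forall>i<m. \<bar>x i\<bar> < 1 / 2 ^ (m + 1)"
  shows "(\<lambda>q. aa m q * Xf m x q) summable_on DD m"
proof -
  define z where "z i = 2 ^ (m + 1) * \<bar>x i\<bar>" for i
  have z0: "0 \<le> z i" for i by (simp add: z_def)
  have z1: "z i < 1" if "i < m" for i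
  proof -
    have "\<bar>x i\<bar> < 1 / 2 ^ (m + 1)" using x that by simp
    then have "2 ^ (m + 1) * \<bar>x i\<bar> < 2 ^ (m + 1) * (1 / 2 ^ (m + 1))"
      by (rule mult_strict_left_mono) simp
    then show ?thesis by (simp add: z_def)
  qed
  define G where "G q = (\<Prod>i<m. z i ^ q i)" for q
  have hG: "(G has_sum (\<Prod>i<m. 1 / (1 - z i))) (DD m)"
    unfolding G_def by (rule has_sum_prod_DD, rule geom_has_sum[OF z0 z1])
  have G0: "0 \<le> G q" for q unfolding G_def by (rule prod_nonneg) (simp add: z0)
  have bnd: "norm (aa m q * Xf m x q) \<le> norm (G q)" for q
  proof -
    let ?R = "\<Prod>i<m. fact (q i) :: real" and ?Y = "\<Prod>i<m. \<bar>x i\<bar> ^ q i"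
    have R0: "?R > 0" by (rule prod_pos) simp
    have "\<bar>Xf m x q\<bar> = (\<Prod>i<m. \<bar>x i\<bar> ^ q i / fact (q i))"
      unfolding Xf_def abs_prod by (rule prod.cong) (simp_all add: abs_divide power_abs)
    also have "\<dots> = ?Y / ?R" by (rule prod_dividef)
    finally have X: "\<bar>Xf m x q\<bar> = ?Y / ?R" .
    have Y0: "0 \<le> ?Y / ?R" using R0 by (simp add: prod_nonneg)
    have "norm (aa m q * Xf m x q) = \<bar>aa m q\<bar> * (?Y / ?R)" by (simp add: abs_mult X)
    also have "\<dots> \<le> (2 ^ ((m + 1) * tot m q) * ?R) * (?Y / ?R)"
      by (rule mult_right_mono[OF aa_bound Y0])
    also have "\<dots> = 2 ^ ((m + 1) * tot m q) * ?Y" using R0 by simp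
    also have "\<dots> = G q"
    proof -
      have "(2::real) ^ ((m + 1) * tot m q) = (2 ^ (m + 1)) ^ tot m q" by (rule power_mult)
      also have "\<dots> = (\<Prod>i<m. (2 ^ (m + 1)) ^ q i)" by (simp add: tot_def power_sum)
      finally have e: "(2::real) ^ ((m + 1) * tot m q) = (\<Prod>i<m. (2 ^ (m + 1)) ^ q i)" .
      show ?thesis unfolding e G_def z_def power_mult_distrib prod.distrib ..
    qed
    also have "\<dots> = norm (G q)" using G0[of q] by simp
    finally show ?thesis .
  qed
  have nG: "(\<lambda>q. norm (G q)) summable_on DD m"
  proof -
    have "G summable_on DD m" by (rule has_sum_imp_summable[OF hG])
    moreover have "\<And>q. norm (G q) = G q" using G0 by simp
    ultimately show ?thesis by simp
  qed
  have "(\<lambda>q. norm (aa m q * Xf m x q)) summable_on DD m"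
    by (rule Infinite_Sum.abs_summable_on_comparison_test[OF nG bnd])
  then show ?thesis by (rule abs_summable_summable)
qed

lemma binom_Xf:
  assumes "\<forall>i. q i \<le> p i"
  shows "Xf m x q * Xf m x (\<lambda>i. p i - q i) = real (\<Prod>i<m. p i choose q i) * Xf m x p"
proof -
  have f: "x i ^ q i / fact (q i) * (x i ^ (p i - q i) / fact (p i - q i)) =
           real (p i choose q i) * (x i ^ p i / fact (p i))" for i
  proof -
    have le: "q i \<le> p i" using assms by simp
    have pw: "x i ^ p i = x i ^ q i * x i ^ (p i - q i)"
      using le by (simp add: power_add[symmetric])
    show ?thesis using le by (simp add: binomial_fact pw field_simps)
  qed
  show ?thesis
    unfolding Xf_def prod.distrib[symmetric] of_nat_prod f ..
qed

lemma pointwise: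
  assumes p: "p \<in> DD m"
  shows "(\<Sum>q\<in>{q. \<forall>i. q i \<le> p i}. (aa m q * Xf m x q) * (\<phi> (tot m (\<lambda>i. p i - q i)) * Xf m x (\<lambda>i. p i - q i)))
       = Xf m x p * (\<Sum>q\<in>{q. \<forall>i. q i \<le> p i}. real (\<Prod>i<m. p i choose q i) * (aa m q * \<phi> (tot m p - tot m q)))"
  unfolding sum_distrib_left
proof (rule sum.cong[OF refl])
  fix q assume "q \<in> {q. \<forall>i. q i \<le> p i}"
  then have q: "\<forall>i. q i \<le> p i" by simp
  have t: "tot m (\<lambda>i. p i - q i) = tot m p - tot m q"
    unfolding tot_def using q by (simp add: sum_subtractf_nat)
  show "(aa m q * Xf m x q) * (\<phi> (tot m (\<lambda>i. p i - q i)) * Xf m x (\<lambda>i. p i - q i)) =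
        Xf m x p * (real (\<Prod>i<m. p i choose q i) * (aa m q * \<phi> (tot m p - tot m q)))"
    using binom_Xf[OF q, of m x] unfolding t by (simp add: algebra_simps)
qed



theorem mainTheorem9:
  fixes m :: nat and t :: real
  assumes "m \<ge> 1"
  shows "\<exists>\<epsilon>>0. \<forall>x :: nat \<Rightarrow> real. (\<forall>i<m. \<bar>x i\<bar> < \<epsilon>) \<longrightarrow>
     ((\<lambda>p. sa_poly multipartite_adj (multipartite_vertices m p) t
            * (\<Prod>i<m. x i ^ p i / fact (p i)))
      has_sum
      (exp (t * (\<Sum>i<m. x i)) * ((1 - real m) + (\<Sum>i<m. cosh (x i)))
        / cosh (\<Sum>i<m. x i)))
     {p :: nat \<Rightarrow> nat. \<forall>i\<ge>m. p i = 0}"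
proof (intro exI conjI allI impI)
  show "(0::real) < 1 / 2 ^ (m + 1)" by simp
  fix x :: "nat \<Rightarrow> real"
  assume x: "\<forall>i<m. \<bar>x i\<bar> < 1 / 2 ^ (m + 1)"
  define A where "A = infsum (\<lambda>q. aa m q * Xf m x q) (DD m)"
  have hA: "((\<lambda>q. aa m q * Xf m x q) has_sum A) (DD m)"
    unfolding A_def using aX_summable[OF x] by (rule has_sum_infsum)
  let ?N = "(1 - real m) + (\<Sum>i<m. cosh (x i))"
  have H1: "((\<lambda>p. \<Sum>q\<in>{q. \<forall>i. q i \<le> p i}. (aa m q * Xf m x q) *
       ((\<lambda>n. if even n then 1 else 0) (tot m (\<lambda>i. p i - q i)) * Xf m x (\<lambda>i. p i - q i)))
      has_sum (A * cosh (\<Sum>i<m. x i))) (DD m)"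
    using has_sum_cauchy_DD[OF hA c_has_sum[of m x]] by simp
  have "((\<lambda>p. Tn m p * Xf m x p) has_sum (A * cosh (\<Sum>i<m. x i))) (DD m)"
  proof (rule has_sum_cong[THEN iffD1, OF _ H1])
    fix p assume p: "p \<in> DD m"
    show "(\<Sum>q\<in>{q. \<forall>i. q i \<le> p i}. (aa m q * Xf m x q) *
       ((\<lambda>n. if even n then 1 else 0) (tot m (\<lambda>i. p i - q i)) * Xf m x (\<lambda>i. p i - q i))) =
       Tn m p * Xf m x p"
    proof -
      have "(\<Sum>q\<in>{q. \<forall>i. q i \<le> p i}. (aa m q * Xf m x q) *
       ((\<lambda>n. if even n then 1 else 0) (tot m (\<lambda>i. p i - q i)) * Xf m x (\<lambda>i. p i - q i))) =
       Xf m x p * (\<Sum>q\<in>{q. \<forall>i. q i \<le> p i}. real (\<Prod>i<m. p i choose q i) *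
         (aa m q * (\<lambda>n. if even n then 1 else 0) (tot m p - tot m q)))"
        by (rule pointwise[OF p])
      also have "\<dots> = Xf m x p * Tn m p" by (subst parity_q[OF p, symmetric]) simp
      finally show ?thesis by simp
    qed
  qed
  then have AN: "A * cosh (\<Sum>i<m. x i) = ?N"
    using N_has_sum[of m x] has_sum_unique by blast
  have H2: "((\<lambda>p. \<Sum>q\<in>{q. \<forall>i. q i \<le> p i}. (aa m q * Xf m x q) *
       ((\<lambda>n. t ^ n) (tot m (\<lambda>i. p i - q i)) * Xf m x (\<lambda>i. p i - q i)))
      has_sum (A * exp (t * (\<Sum>i<m. x i)))) (DD m)"
    using has_sum_cauchy_DD[OF hA g_has_sum[of t m x]] by simp
  have H3: "((\<lambda>p. sa_poly multipartite_adj (multipartite_vertices m p) t * Xf m x p)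
      has_sum (A * exp (t * (\<Sum>i<m. x i)))) (DD m)"
  proof (rule has_sum_cong[THEN iffD1, OF _ H2])
    fix p assume p: "p \<in> DD m"
    show "(\<Sum>q\<in>{q. \<forall>i. q i \<le> p i}. (aa m q * Xf m x q) *
       ((\<lambda>n. t ^ n) (tot m (\<lambda>i. p i - q i)) * Xf m x (\<lambda>i. p i - q i))) =
       sa_poly multipartite_adj (multipartite_vertices m p) t * Xf m x p"
    proof -
      have "(\<Sum>q\<in>{q. \<forall>i. q i \<le> p i}. (aa m q * Xf m x q) *
       ((\<lambda>n. t ^ n) (tot m (\<lambda>i. p i - q i)) * Xf m x (\<lambda>i. p i - q i))) =
       Xf m x p * (\<Sum>q\<in>{q. \<forall>i. q i \<le> p i}. real (\<Prod>i<m. p i choose q i) *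
         (aa m q * (\<lambda>n. t ^ n) (tot m p - tot m q)))"
        by (rule pointwise[OF p])
      also have "\<dots> = Xf m x p * sa_poly multipartite_adj (multipartite_vertices m p) t"
        by (subst sa_poly_q[OF p]) simp
      finally show ?thesis by simp
    qed
  qed
  have val: "A * exp (t * (\<Sum>i<m. x i)) = exp (t * (\<Sum>i<m. x i)) * ?N / cosh (\<Sum>i<m. x i)"
  proof -
    have Aeq: "A = ?N / cosh (\<Sum>i<m. x i)"
      using AN by (simp add: eq_divide_eq)
    show ?thesis unfolding Aeq by simp
  qed
  show "((\<lambda>p. sa_poly multipartite_adj (multipartite_vertices m p) t
            * (\<Prod>i<m. x i ^ p i / fact (p i)))
      has_sum
      (exp (t * (\<Sum>i<m. x i)) * ((1 - real m) + (\<Sum>i<m. cosh (x i)))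
        / cosh (\<Sum>i<m. x i)))
     {p :: nat \<Rightarrow> nat. \<forall>i\<ge>m. p i = 0}"
    using H3 unfolding val DD_def Xf_def .
qed


end
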